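(* Let $\Lambda_2,\Lambda_3,\Lambda_4\in\mathbb C$ with $\Lambda_4\ne0$ and let $\mathcal V^{[2]}$, $v_\lambda$, $\xi$, $\widetilde{\mathbf L}_\mu$ and $\deg_\delta$ be as in the context. Define $M(v_\mu,v_\lambda)=\xi\big(\widetilde{\mathbf L}_\mu\mathbf L_{-\lambda}|J\rangle\big)$. Then for all partitions $\lambda,\mu$: $M(v_\mu,v_\lambda)=0$ whenever $\deg_1v_\mu>\deg_1v_\lambda$. If moreover $\Lambda_3=0$, then $M(v_\mu,v_\lambda)=0$ whenever $\deg_2v_\mu>\deg_2v_\lambda$.
   Context: $\mathcal V^{[2]}$ is the Virasoro Whittaker module generated by $|J\rangle$ with $L_n|J\rangle=\Lambda_n|J\rangle$ ($n=2,3,4$), $L_n|J\rangle=0$ ($n>4$). Basis $v_\lambda=\mathbf L_{-\lambda}|J\rangle$, $\mathbf L_{-\lambda}=L_{-\lambda_1+2}\cdots L_{-\lambda_\ell+2}$ for partitions $\lambda=(\lambda_1\ge\dots\ge\lambda_\ell\ge1)$, $v_\emptyset=|J\rangle$. $\xi$ is the linear functional giving the coefficient of $|J\rangle$ in this basis. Shifted generators: $\widetilde L_n=L_n-\Lambda_n$ for $n=3,4$ and $\widetilde L_n=L_n$ for $n>4$; $\widetilde{\mathbf L}_\mu=\widetilde L_{\mu_1+2}\cdots\widetilde L_{\mu_m+2}$ for $\mu=(\mu_1\ge\dots\ge\mu_m\ge1)$. For $\delta\in\{1,2\}$ and $\lambda=(\cdots3^{n_3}2^{n_2}1^{n_1})$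 (multiplicity notation), $\deg_\delta v_\lambda=n_1+\delta n_2+\sum_{k>2}n_k(k-2)$; equivalently $\deg_\delta L_{-k}=k$ ($k>0$), $\deg_\delta L_0=\delta$, $\deg_\delta L_1=1$. *)

theory Defs
  imports Complex_Main
begin

definition is_partition :: "nat list \<Rightarrow> bool" where
  "is_partition lam \<longleftrightarrow> sorted_wrt (\<ge>) lam \<and> (\<forall>k\<in>set lam. 1 \<le> k)"

definition Lvec :: "(int \<Rightarrow> 'v \<Rightarrow> 'v) \<Rightarrow> 'v \<Rightarrow> nat list \<Rightarrow> 'v" where
  "Lvec L J lam = foldr (\<lambda>k w. L (2 - int k) w) lam J"

definition Lshift :: "(complex \<Rightarrow> 'v::ab_group_add \<Rightarrow> 'v) \<Rightarrow> (int \<Rightarrow> 'v \<Rightarrow> 'v) \<Rightarrow> complex \<Rightarrow> complex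
    \<Rightarrow> int \<Rightarrow> 'v \<Rightarrow> 'v" where
  "Lshift scale L \<Lambda>3 \<Lambda>4 n x =
     (if n = 3 then L 3 x - scale \<Lambda>3 x
      else if n = 4 then L 4 x - scale \<Lambda>4 x
      else L n x)"

definition Ltilde :: "(complex \<Rightarrow> 'v::ab_group_add \<Rightarrow> 'v) \<Rightarrow> (int \<Rightarrow> 'v \<Rightarrow> 'v) \<Rightarrow> complex
    \<Rightarrow> complex \<Rightarrow> nat list \<Rightarrow> 'v \<Rightarrow> 'v" where
  "Ltilde scale L \<Lambda>3 \<Lambda>4 mu x = foldr (\<lambda>k w. Lshift scale L \<Lambda>3 \<Lambda>4 (int k + 2) w) mu x"

definition part_deg :: "nat \<Rightarrow> nat \<Rightarrow> nat" where
  "part_deg \<delta> k = (if k = 1 then 1 else if k = 2 then \<delta> else k - 2)"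

definition deg :: "nat \<Rightarrow> nat list \<Rightarrow> nat" where
  "deg \<delta> lam = sum_list (map (part_deg \<delta>) lam)"

text \<open>V is (a copy of) the Whittaker module V^[2]: a complex vector space with linear
  operators L_n (n in Z) satisfying the Virasoro relations with central charge c,
  generated by J with L_n J = Lambda_n J (n = 2,3,4), L_n J = 0 (n > 4), such that the
  vectors v_lambda (lambda a partition) are pairwise distinct and form a basis.\<close>
definition whittaker2 :: "(complex \<Rightarrow> 'v::ab_group_add \<Rightarrow> 'v) \<Rightarrow> (int \<Rightarrow> 'v \<Rightarrow> 'v) \<Rightarrow> 'v
    \<Rightarrow> complex \<Rightarrow> complex \<Rightarrow> complex \<Rightarrow> complex \<Rightarrow> bool" where
  "whittaker2 scale L J c \<Lambda>2 \<Lambda>3 \<Lambda>4 \<longleftrightarrow>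
     vector_space scale \<and>
     (\<forall>n. Vector_Spaces.linear scale scale (L n)) \<and>
     (\<forall>m n x. L m (L n x) - L n (L m x) =
        scale (of_int (m - n)) (L (m + n) x)
        + scale (if m + n = 0 then c / 12 * (of_int m ^ 3 - of_int m) else 0) x) \<and>
     L 2 J = scale \<Lambda>2 J \<and> L 3 J = scale \<Lambda>3 J \<and> L 4 J = scale \<Lambda>4 J \<and>
     (\<forall>n>4. L n J = 0) \<and>
     inj_on (Lvec L J) {lam. is_partition lam} \<and>
     \<not> module.dependent scale (Lvec L J ` {lam. is_partition lam}) \<and>
     module.span scale (Lvec L J ` {lam. is_partition lam}) = UNIV"

definition xi :: "(complex \<Rightarrow> 'v::ab_group_add \<Rightarrow> 'v) \<Rightarrow> (int \<Rightarrow> 'v \<Rightarrow> 'v) \<Rightarrow> 'v \<Rightarrow> 'v \<Rightarrow> complex" where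
  "xi scale L J x = module.representation scale (Lvec L J ` {lam. is_partition lam}) x J"

definition Mform :: "(complex \<Rightarrow> 'v::ab_group_add \<Rightarrow> 'v) \<Rightarrow> (int \<Rightarrow> 'v \<Rightarrow> 'v) \<Rightarrow> 'v
    \<Rightarrow> complex \<Rightarrow> complex \<Rightarrow> nat list \<Rightarrow> nat list \<Rightarrow> complex" where
  "Mform scale L J \<Lambda>3 \<Lambda>4 mu lam = xi scale L J (Ltilde scale L \<Lambda>3 \<Lambda>4 mu (Lvec L J lam))"

end

theory Submission
  imports Defs
begin

definition W :: "(int \<Rightarrow> 'v \<Rightarrow> 'v) \<Rightarrow> 'v \<Rightarrow> int list \<Rightarrow> 'v" where
  "W L J ws = foldr (\<lambda>a w. L a w) ws J"

definition dd :: "nat \<Rightarrow> int \<Rightarrow> int" where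
  "dd \<delta> a = (if a = 1 then 1 else if a = 0 then int \<delta> else - a)"

definition dw :: "nat \<Rightarrow> int list \<Rightarrow> int" where
  "dw \<delta> ws = sum_list (map (dd \<delta>) ws)"

definition ee :: "nat \<Rightarrow> int \<Rightarrow> int" where
  "ee \<delta> m = (if m \<le> 1 then dd \<delta> m else if m = 2 then 0
     else if m = 3 then (if \<delta> = 1 then 0 else -1) else if m = 4 then 0 else 4 - m)"

definition tt :: "nat \<Rightarrow> int \<Rightarrow> int" where
  "tt \<delta> m = (if m = 3 then -1 else if m = 4 then - int \<delta> else 4 - m)"

lemma ineq_e: "\<delta> = 1 \<or> \<delta> = 2 \<Longrightarrow> m \<ge> 2 \<Longrightarrow> a \<le> 1 \<Longrightarrow> ee \<delta> (m + a) \<le> dd \<delta> a + ee \<delta> m"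
  unfolding ee_def dd_def by auto

lemma ineq_t: "\<delta> = 1 \<or> \<delta> = 2 \<Longrightarrow> m \<ge> 3 \<Longrightarrow> a \<le> 1 \<Longrightarrow> ee \<delta> (m + a) \<le> dd \<delta> a + tt \<delta> m"
  unfolding ee_def dd_def tt_def by auto

lemma ineq_ce: "\<delta> = 1 \<or> \<delta> = 2 \<Longrightarrow> m \<ge> 2 \<Longrightarrow> m + a = 0 \<Longrightarrow> 0 \<le> dd \<delta> a + ee \<delta> m"
  unfolding ee_def dd_def by auto

lemma ineq_ct: "\<delta> = 1 \<or> \<delta> = 2 \<Longrightarrow> m \<ge> 3 \<Longrightarrow> m + a = 0 \<Longrightarrow> 0 \<le> dd \<delta> a + tt \<delta> m"
  unfolding tt_def dd_def by auto

lemma dd_nonneg: "a \<le> 1 \<Longrightarrow> 0 \<le> dd \<delta> a"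
  unfolding dd_def by auto

lemma dw_nonneg: "\<forall>a\<in>set ws. a \<le> 1 \<Longrightarrow> 0 \<le> dw \<delta> ws"
  unfolding dw_def by (induction ws) (auto intro: add_nonneg_nonneg dd_nonneg)

locale wh = vector_space scale for scale :: "complex \<Rightarrow> 'v::ab_group_add \<Rightarrow> 'v" +
  fixes L :: "int \<Rightarrow> 'v \<Rightarrow> 'v" and J :: 'v and c \<Lambda>2 \<Lambda>3 \<Lambda>4 :: complex and \<delta> :: nat
  assumes linL: "\<And>n. Vector_Spaces.linear scale scale (L n)"
  and comm: "\<And>m n x. L m (L n x) - L n (L m x) =
        scale (of_int (m - n)) (L (m + n) x)
        + scale (if m + n = 0 then c / 12 * (of_int m ^ 3 - of_int m) else 0) x"
  and J2: "L 2 J = scale \<Lambda>2 J" and J3: "L 3 J = scale \<Lambda>3 J" and J4: "L 4 J = scale \<Lambda>4 J"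
  and J5: "\<And>n. n > 4 \<Longrightarrow> L n J = 0"
  and dl: "\<delta> = 1 \<or> \<delta> = 2" and d3: "\<delta> = 2 \<Longrightarrow> \<Lambda>3 = 0"
begin

definition F :: "int \<Rightarrow> 'v set" where
  "F D = span {W L J ws | ws. (\<forall>a\<in>set ws. a \<le> 1) \<and> dw \<delta> ws \<le> D}"

abbreviation Lsh where "Lsh \<equiv> Lshift scale L \<Lambda>3 \<Lambda>4"

lemma L_add: "L n (x + y) = L n x + L n y"
  using linL[of n] Vector_Spaces.linear_iff[of scale scale "L n"] by blast

lemma L_scale: "L n (scale a x) = scale a (L n x)"
  using linL[of n] Vector_Spaces.linear_iff[of scale scale "L n"] by blast

lemma L_diff: "L n (x - y) = L n x - L n y"
  by (metis L_add add_diff_cancel diff_add_cancel)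

lemma F_mono: "D \<le> D' \<Longrightarrow> x \<in> F D \<Longrightarrow> x \<in> F D'"
  unfolding F_def by (erule rev_subsetD[OF _ span_mono]) auto

lemma F_neg: "D < 0 \<Longrightarrow> x \<in> F D \<Longrightarrow> x = 0"
proof -
  assume "D < 0" "x \<in> F D"
  have "{W L J ws | ws. (\<forall>a\<in>set ws. a \<le> 1) \<and> dw \<delta> ws \<le> D} = {}"
    using \<open>D < 0\<close> dw_nonneg[of _ \<delta>] by force
  from this \<open>x \<in> F D\<close> show "x = 0" unfolding F_def by (metis span_empty singletonD)
qed

lemma word_F: "\<forall>a\<in>set ws. a \<le> 1 \<Longrightarrow> dw \<delta> ws \<le> D \<Longrightarrow> W L J ws \<in> F D"
  unfolding F_def by (rule span_base) blast

lemma F_sub: "subspace (F D)" unfolding F_def by simp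

lemma lin_F:
  assumes add: "\<And>x y. f (x + y) = f x + f y" and sc: "\<And>a x. f (scale a x) = scale a (f x)"
    and base: "\<And>ws. \<forall>a\<in>set ws. a \<le> 1 \<Longrightarrow> dw \<delta> ws \<le> D \<Longrightarrow> f (W L J ws) \<in> F D'"
    and x: "x \<in> F D"
  shows "f x \<in> F D'"
proof -
  have "x \<in> span {W L J ws | ws. (\<forall>a\<in>set ws. a \<le> 1) \<and> dw \<delta> ws \<le> D}" using x F_def by simp
  then show ?thesis
  proof (induction rule: span_induct)
    case base
    have f0: "f 0 = 0" using add[of 0 0] by simp
    show ?case unfolding subspace_def
      using f0 add sc span_zero span_add span_scale F_def by auto
  next
    case (step y)
    then show ?case using base by auto
  qed
qed

lemma creation: "a \<le> 1 \<Longrightarrow> x \<in> F D \<Longrightarrow> L a x \<in> F (D + dd \<delta> a)"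
  apply (rule lin_F[where D=D and f="L a"])
  apply (rule L_add)
  apply (rule L_scale)
  subgoal for ws
    using word_F[of "a # ws" "D + dd \<delta> a"] by (simp add: W_def dw_def)
  by assumption

lemma Lsh_add: "Lsh n (x + y) = Lsh n x + Lsh n y"
  unfolding Lshift_def by (simp add: L_add scale_right_distrib)

lemma Lsh_scale: "Lsh n (scale a x) = scale a (Lsh n x)"
  unfolding Lshift_def by (simp add: L_scale scale_right_diff_distrib scale_scale mult.commute)

lemma Lsh_comm: "Lsh m (L a x) = L a (Lsh m x) + scale (of_int (m - a)) (L (m + a) x)
        + scale (if m + a = 0 then c / 12 * (of_int m ^ 3 - of_int m) else 0) x"
  using comm[of m a x] unfolding Lshift_def
  by (auto simp: L_diff L_scale algebra_simps)

lemma L_comm: "L m (L a x) = L a (L m x) + scale (of_int (m - a)) (L (m + a) x)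
        + scale (if m + a = 0 then c / 12 * (of_int m ^ 3 - of_int m) else 0) x"
  using comm[of m a x] by (simp add: algebra_simps)

lemma central_F:
  assumes "x \<in> F D" "m + a = 0 \<longrightarrow> D \<le> E"
  shows "scale (if m + a = 0 then k else 0) x \<in> F E"
proof (cases "m + a = 0")
  case True then show ?thesis using assms F_mono F_sub subspace_scale by (simp add: F_def span_scale) 
next
  case False then show ?thesis using F_def span_zero by simp
qed

lemma main:
  "\<forall>a\<in>set ws. a \<le> 1 \<Longrightarrow> (\<forall>m. L m (W L J ws) \<in> F (dw \<delta> ws + ee \<delta> m)) \<and>
     (\<forall>m\<ge>3. Lsh m (W L J ws) \<in> F (dw \<delta> ws + tt \<delta> m))"
proof (induction ws)
  case Nil
  have J0: "J \<in> F 0" using word_F[of "[]" 0] by (simp add: W_def dw_def)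
  have z: "0 \<in> F D" for D using F_def span_zero by simp
  have sJ: "scale k J \<in> F D" if "0 \<le> D" for k D
    using F_mono[OF that J0] F_def span_scale by simp
  have A: "L m J \<in> F (ee \<delta> m)" for m
  proof -
    consider "m \<le> 1" | "m = 2" | "m = 3" | "m = 4" | "m > 4" by linarith
    then show ?thesis
    proof cases
      case 1 then show ?thesis using word_F[of "[m]" "ee \<delta> m"] by (simp add: W_def dw_def ee_def)
    next
      case 2 then show ?thesis using sJ by (simp add: J2 ee_def)
    next
      case 3 then show ?thesis using sJ dl d3 z by (auto simp: J3 ee_def)
    next
      case 4 then show ?thesis using sJ by (simp add: J4 ee_def)
    next
      case 5 then show ?thesis using z by (simp add: J5)
    qed
  qed
  have B: "Lsh m J \<in> F (tt \<delta> m)" if "m \<ge> 3" for m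
    using that z by (auto simp: Lshift_def J3 J4 J5)
  show ?case using A B by (simp add: W_def dw_def)
next
  case (Cons a ws)
  have a1: "a \<le> 1" and ws1: "\<forall>a\<in>set ws. a \<le> 1" using Cons.prems by auto
  note IH = Cons.IH[OF ws1]
  define w where "w = W L J ws"
  have Wc: "W L J (a # ws) = L a w" by (simp add: W_def w_def)
  have dwc: "dw \<delta> (a # ws) = dd \<delta> a + dw \<delta> ws" by (simp add: dw_def)
  have wF: "w \<in> F (dw \<delta> ws)" using word_F[OF ws1] w_def by simp
  have P1: "L m (L a w) \<in> F (dw \<delta> (a # ws) + ee \<delta> m)" for m
  proof (cases "m \<le> 1")
    case True
    then show ?thesis using word_F[of "m # a # ws"] a1 ws1
      by (simp add: W_def w_def dw_def ee_def)
  next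
    case False
    have "L m w \<in> F (dw \<delta> ws + ee \<delta> m)" using IH w_def by simp
    from creation[OF a1 this]
    have t1: "L a (L m w) \<in> F (dw \<delta> (a # ws) + ee \<delta> m)"
      using dwc by (simp add: algebra_simps)
    have t2: "scale (of_int (m - a)) (L (m + a) w) \<in> F (dw \<delta> (a # ws) + ee \<delta> m)"
    proof -
      have "L (m + a) w \<in> F (dw \<delta> ws + ee \<delta> (m + a))" using IH w_def by simp
      moreover have "dw \<delta> ws + ee \<delta> (m + a) \<le> dw \<delta> (a # ws) + ee \<delta> m"
        using ineq_e[OF dl, of m a] False a1 dwc by simp
      ultimately show ?thesis using F_mono F_def span_scale by blast
    qed
    have t3: "scale (if m + a = 0 then c / 12 * (of_int m ^ 3 - of_int m) else 0) w
        \<in> F (dw \<delta> (a # ws) + ee \<delta> m)"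
      by (rule central_F[OF wF]) (use ineq_ce[OF dl, of m a] False dwc in simp)
    have "L a (L m w) + scale (of_int (m - a)) (L (m + a) w)
        + scale (if m + a = 0 then c / 12 * (of_int m ^ 3 - of_int m) else 0) w \<in> F (dw \<delta> (a # ws) + ee \<delta> m)"
      using t1 t2 t3 F_def span_add by simp
    then show ?thesis using L_comm[of m a w] by simp
  qed
  have P2: "Lsh m (L a w) \<in> F (dw \<delta> (a # ws) + tt \<delta> m)" if m3: "m \<ge> 3" for m
  proof -
    have "Lsh m w \<in> F (dw \<delta> ws + tt \<delta> m)" using IH w_def m3 by simp
    from creation[OF a1 this]
    have t1: "L a (Lsh m w) \<in> F (dw \<delta> (a # ws) + tt \<delta> m)"
      using dwc by (simp add: algebra_simps)
    have t2: "scale (of_int (m - a)) (L (m + a) w) \<in> F (dw \<delta> (a # ws) + tt \<delta> m)"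
    proof -
      have "L (m + a) w \<in> F (dw \<delta> ws + ee \<delta> (m + a))" using IH w_def by simp
      moreover have "dw \<delta> ws + ee \<delta> (m + a) \<le> dw \<delta> (a # ws) + tt \<delta> m"
        using ineq_t[OF dl, of m a] m3 a1 dwc by simp
      ultimately show ?thesis using F_mono F_def span_scale by blast
    qed
    have t3: "scale (if m + a = 0 then c / 12 * (of_int m ^ 3 - of_int m) else 0) w
        \<in> F (dw \<delta> (a # ws) + tt \<delta> m)"
      by (rule central_F[OF wF]) (use ineq_ct[OF dl, of m a] m3 dwc in simp)
    show ?thesis unfolding Lsh_comm using t1 t2 t3 F_def span_add by simp
  qed
  show ?case using P1 P2 Wc by simp
qed

lemma Lsh_F: "m \<ge> 3 \<Longrightarrow> x \<in> F D \<Longrightarrow> Lsh m x \<in> F (D + tt \<delta> m)"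
  apply (rule lin_F[where D=D and f="Lsh m"])
  apply (rule Lsh_add)
  apply (rule Lsh_scale)
  subgoal for ws using main[of ws] F_mono[of "dw \<delta> ws + tt \<delta> m" "D + tt \<delta> m"] by auto
  by assumption

lemma Ltilde_F: "\<forall>k\<in>set mu. 1 \<le> k \<Longrightarrow> x \<in> F D \<Longrightarrow> Ltilde scale L \<Lambda>3 \<Lambda>4 mu x \<in> F (D - int (deg \<delta> mu))"
proof (induction mu)
  case Nil then show ?case by (simp add: Ltilde_def deg_def)
next
  case (Cons k mu)
  have k1: "1 \<le> k" using Cons.prems by simp
  have "Ltilde scale L \<Lambda>3 \<Lambda>4 mu x \<in> F (D - int (deg \<delta> mu))" using Cons by simp
  then have "Lsh (int k + 2) (Ltilde scale L \<Lambda>3 \<Lambda>4 mu x) \<in> F (D - int (deg \<delta> mu) + tt \<delta> (int k + 2))"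
    using Lsh_F k1 by simp
  moreover have "tt \<delta> (int k + 2) = - int (part_deg \<delta> k)"
    using k1 by (auto simp: tt_def part_deg_def)
  ultimately show ?case by (simp add: Ltilde_def deg_def algebra_simps)
qed

lemma Lvec_W: "Lvec L J lam = W L J (map (\<lambda>k. 2 - int k) lam)"
  unfolding Lvec_def W_def by (induction lam) auto

lemma dw_deg: "\<forall>k\<in>set lam. 1 \<le> k \<Longrightarrow> dw \<delta> (map (\<lambda>k. 2 - int k) lam) = int (deg \<delta> lam)"
  unfolding dw_def deg_def by (induction lam) (auto simp: dd_def part_deg_def of_nat_diff)

lemma result:
  assumes "is_partition lam" "is_partition mu" "deg \<delta> mu > deg \<delta> lam"
  shows "Ltilde scale L \<Lambda>3 \<Lambda>4 mu (Lvec L J lam) = 0"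
proof -
  have l1: "\<forall>k\<in>set lam. 1 \<le> k" and m1: "\<forall>k\<in>set mu. 1 \<le> k"
    using assms unfolding is_partition_def by auto
  have "Lvec L J lam \<in> F (int (deg \<delta> lam))"
    using word_F[of "map (\<lambda>k. 2 - int k) lam"] l1 dw_deg[OF l1] by (auto simp: Lvec_W)
  from Ltilde_F[OF m1 this] have "Ltilde scale L \<Lambda>3 \<Lambda>4 mu (Lvec L J lam) \<in> F (int (deg \<delta> lam) - int (deg \<delta> mu))" .
  moreover have "int (deg \<delta> lam) - int (deg \<delta> mu) < 0" using assms(3) by simp
  ultimately show ?thesis using F_neg by blast
qed

end

theorem lemmaA3:
  fixes scale :: "complex \<Rightarrow> 'v::ab_group_add \<Rightarrow> 'v"
    and L :: "int \<Rightarrow> 'v \<Rightarrow> 'v" and J :: 'v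
    and c \<Lambda>2 \<Lambda>3 \<Lambda>4 :: complex
  assumes W: "whittaker2 scale L J c \<Lambda>2 \<Lambda>3 \<Lambda>4"
    and nz: "\<Lambda>4 \<noteq> 0"
  shows "(\<forall>lam mu. is_partition lam \<and> is_partition mu \<and> deg 1 mu > deg 1 lam
            \<longrightarrow> Mform scale L J \<Lambda>3 \<Lambda>4 mu lam = 0)
       \<and> (\<Lambda>3 = 0 \<longrightarrow> (\<forall>lam mu. is_partition lam \<and> is_partition mu \<and> deg 2 mu > deg 2 lam
            \<longrightarrow> Mform scale L J \<Lambda>3 \<Lambda>4 mu lam = 0))"
proof -
  have vs: "vector_space scale" and lin: "\<forall>n. Vector_Spaces.linear scale scale (L n)"
    and cm: "\<forall>m n x. L m (L n x) - L n (L m x) =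
        scale (of_int (m - n)) (L (m + n) x)
        + scale (if m + n = 0 then c / 12 * (of_int m ^ 3 - of_int m) else 0) x"
    and j: "L 2 J = scale \<Lambda>2 J" "L 3 J = scale \<Lambda>3 J" "L 4 J = scale \<Lambda>4 J"
    and j5: "\<forall>n>4. L n J = 0"
    using W unfolding whittaker2_def by auto
  have xi0: "xi scale L J 0 = 0"
  proof -
    interpret vector_space scale by (rule vs)
    show ?thesis unfolding xi_def using representation_zero by simp
  qed
  interpret w1: wh scale L J c \<Lambda>2 \<Lambda>3 \<Lambda>4 1
    by (rule wh.intro[OF vs], rule wh_axioms.intro) (use lin cm j j5 in auto)
  have A: "\<forall>lam mu. is_partition lam \<and> is_partition mu \<and> deg 1 mu > deg 1 lam
            \<longrightarrow> Mform scale L J \<Lambda>3 \<Lambda>4 mu lam = 0"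
    using w1.result xi0 unfolding Mform_def by auto
  have B: "\<forall>lam mu. is_partition lam \<and> is_partition mu \<and> deg 2 mu > deg 2 lam
            \<longrightarrow> Mform scale L J \<Lambda>3 \<Lambda>4 mu lam = 0" if h: "\<Lambda>3 = 0"
  proof -
    interpret w2: wh scale L J c \<Lambda>2 \<Lambda>3 \<Lambda>4 2
      by (rule wh.intro[OF vs], rule wh_axioms.intro) (use lin cm j j5 h in auto)
    show ?thesis using w2.result xi0 unfolding Mform_def by auto
  qed
  show ?thesis using A B by blast
qed

end
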